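(* Let $n\ge 2$ and $\lambda>0$. Then the CUSUM classifier $h^{\mathrm{CUSUM}}_\lambda:\mathbb{R}^n\to\{0,1\}$, $h^{\mathrm{CUSUM}}_\lambda(\boldsymbol{x})=\mathbb{1}\{\|\mathcal{C}(\boldsymbol{x})\|_\infty>\lambda\}$, belongs to $\mathcal{H}_{1,2n-2}$.
   Context: For $i\in[n-1]$ let $\boldsymbol{v}_i=\bigl(\sqrt{\tfrac{n-i}{in}}\boldsymbol{1}_i^\top,\,-\sqrt{\tfrac{i}{(n-i)n}}\boldsymbol{1}_{n-i}^\top\bigr)^\top\in\mathbb{R}^n$, where $\boldsymbol{1}_k$ is the all-ones vector of length $k$, and define the CUSUM transformation $\mathcal{C}(\boldsymbol{x})=(\boldsymbol{v}_1^\top\boldsymbol{x},\ldots,\boldsymbol{v}_{n-1}^\top\boldsymbol{x})^\top$. Neural network classes: for $L\ge1$ and widths $\boldsymbol{m}=(m_1,\ldots,m_L)$, set $m_0=n$, $m_{L+1}=1$; for $\boldsymbol{b}\in\mathbb{R}^r$ let $\sigma_{\boldsymbol{b}}(y_1,\ldots,y_r)=(\max(y_1-b_1,0),\ldots,\max(y_r-b_r,0))$. $\mathcal{H}_{L,\boldsymbol{m}}$ is the class of all functions $h:\mathbb{R}^n\to\{0,1\}$ of the form $h(\boldsymbol{x})=\sigma^*_\lambda W_L\sigma_{\boldsymbol{b}_L}W_{L-1}\sigma_{\boldsymbol{b}_{L-1}}\cdots W_1\sigma_{\boldsymbol{b}_1}W_0\boldsymbol{x}$, where $\sigma^*_\lambda(x)=\mathbb{1}\{x>\lambda\}$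 with $\lambda>0$, $W_\ell\in\mathbb{R}^{m_{\ell+1}\times m_\ell}$ for $\ell=0,\ldots,L$, and $\boldsymbol{b}_\ell\in\mathbb{R}^{m_\ell}$. $\mathcal{H}_{1,m}$ denotes the class with one hidden layer of width $m$. *)

theory Defs
  imports Complex_Main
begin

text \<open>Vectors in R^k are represented as functions nat => real, of which only
  the coordinates 0..k-1 are used; matrices as nat => nat => real.\<close>

definition matvec :: "(nat \<Rightarrow> nat \<Rightarrow> real) \<Rightarrow> nat \<Rightarrow> (nat \<Rightarrow> real) \<Rightarrow> (nat \<Rightarrow> real)" where
  "matvec W m y = (\<lambda>i. \<Sum>j<m. W i j * y j)"

definition relu_shift :: "(nat \<Rightarrow> real) \<Rightarrow> (nat \<Rightarrow> real) \<Rightarrow> (nat \<Rightarrow> real)" where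
  "relu_shift b y = (\<lambda>i. max (y i - b i) 0)"

fun net_eval :: "(nat \<Rightarrow> nat \<Rightarrow> real) list \<Rightarrow> (nat \<Rightarrow> real) list \<Rightarrow> nat list
                  \<Rightarrow> (nat \<Rightarrow> real) \<Rightarrow> (nat \<Rightarrow> real)" where
  "net_eval (W # Ws) (b # bs) (m # ms) z = net_eval Ws bs ms (matvec W m (relu_shift b z))"
| "net_eval _ _ _ z = z"

definition nn_class :: "nat \<Rightarrow> nat list \<Rightarrow> nat \<Rightarrow> ((nat \<Rightarrow> real) \<Rightarrow> nat) set" where
  "nn_class L ms n = {h. 1 \<le> L \<and> length ms = L \<and>
     (\<exists>lam W0 Ws bs. lam > 0 \<and> length Ws = L \<and> length bs = L \<and>
        (\<forall>x. h x = (if net_eval Ws bs ms (matvec W0 n x) 0 > lam then 1 else 0)))}"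

text \<open>CUSUM vectors v_i, i in 1..n-1, with coordinates j = 0..n-1 (0-based).\<close>
definition cusum_v :: "nat \<Rightarrow> nat \<Rightarrow> nat \<Rightarrow> real" where
  "cusum_v n i j = (if j < i then sqrt ((real n - real i) / (real i * real n))
                    else - sqrt (real i / ((real n - real i) * real n)))"

definition cusum :: "nat \<Rightarrow> (nat \<Rightarrow> real) \<Rightarrow> nat \<Rightarrow> real" where
  "cusum n x i = (\<Sum>j<n. cusum_v n i j * x j)"

definition h_cusum :: "nat \<Rightarrow> real \<Rightarrow> (nat \<Rightarrow> real) \<Rightarrow> nat" where
  "h_cusum n lam x = (if Max ((\<lambda>i. \<bar>cusum n x i\<bar>) ` {1..n-1}) > lam then 1 else 0)"

end

theory Submission
  imports Defs
begin

lemma sum_double: "(\<Sum>j<m+m. f j) = (\<Sum>j<m. f j) + (\<Sum>j<m. f (j+m)) " for f :: "nat \<Rightarrow> real"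
proof -
  have "(\<Sum>j<m+m. f j) = (\<Sum>j<m. f j) + (\<Sum>j\<in>{m..<m+m}. f j)"
    by (metis add.commute le_add2 sum.atLeastLessThan_concat lessThan_atLeast0 zero_le)
  also have "(\<Sum>j\<in>{m..<m+m}. f j) = (\<Sum>j<m. f (j+m))"
    using sum.shift_bounds_nat_ivl[of f 0 m m] by (simp add: lessThan_atLeast0 add.commute)
  finally show ?thesis .
qed

lemma pair_term:
  fixes c lam :: real assumes "lam > 0"
  shows "max (c + lam) 0 + max (- c + lam) 0 \<ge> 2*lam"
    and "\<bar>c\<bar> \<le> lam \<Longrightarrow> max (c + lam) 0 + max (- c + lam) 0 = 2*lam"
    and "\<bar>c\<bar> > lam \<Longrightarrow> max (c + lam) 0 + max (- c + lam) 0 > 2*lam"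
  using assms by (cases "c \<ge> 0"; auto simp: max_def; linarith)+

lemma sum_crit:
  fixes c :: "nat \<Rightarrow> real" and lam :: real assumes "lam > 0"
  shows "((\<Sum>k<m. max (c k + lam) 0 + max (- c k + lam) 0) > real m * (2*lam))
         \<longleftrightarrow> (\<exists>k<m. \<bar>c k\<bar> > lam)"
proof
  assume A: "(\<Sum>k<m. max (c k + lam) 0 + max (- c k + lam) 0) > real m * (2*lam)"
  show "\<exists>k<m. \<bar>c k\<bar> > lam"
  proof (rule ccontr)
    assume "\<not> ?thesis"
    then have "\<forall>k<m. max (c k + lam) 0 + max (- c k + lam) 0 = 2*lam"
      using pair_term(2)[OF assms] by (meson not_less)
    then have "(\<Sum>k<m. max (c k + lam) 0 + max (- c k + lam) 0) = real m * (2*lam)"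
      by simp
    with A show False by simp
  qed
next
  assume "\<exists>k<m. \<bar>c k\<bar> > lam"
  then obtain k where k: "k < m" "\<bar>c k\<bar> > lam" by blast
  let ?t = "\<lambda>k. max (c k + lam) 0 + max (- c k + lam) 0 - 2*lam"
  have nn: "\<forall>i\<in>{..<m}. 0 \<le> ?t i" using pair_term(1)[OF assms] by auto
  have "?t k \<le> (\<Sum>i<m. ?t i)"
    by (rule member_le_sum) (use nn k in auto)
  moreover have "?t k > 0" using pair_term(3)[OF assms k(2)] by simp
  moreover have "(\<Sum>i<m. ?t i) = (\<Sum>k<m. max (c k + lam) 0 + max (- c k + lam) 0) - real m * (2*lam)"
    by (simp add: sum_subtractf)
  ultimately show "(\<Sum>k<m. max (c k + lam) 0 + max (- c k + lam) 0) > real m * (2*lam)" by linarith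
qed

theorem lemma3p1:
  fixes n :: nat and lam :: real
  assumes "n \<ge> 2" and "lam > 0"
  shows "h_cusum n lam \<in> nn_class 1 [2 * n - 2] n"
proof -
  define m where "m = n - 1"
  have nm: "2*n - 2 = m + m" "n - 1 = m" using assms(1) unfolding m_def by auto
  define W0 where "W0 = (\<lambda>k j. if k < m then cusum_v n (k+1) j else - cusum_v n (k - m + 1) j)"
  define W1 where "W1 = (\<lambda>(i::nat) (j::nat). (1::real))"
  define b1 where "b1 = (\<lambda>(i::nat). - lam)"
  have key: "(if net_eval [W1] [b1] [2*n-2] (matvec W0 n x) 0 > real m * (2*lam) then 1 else 0)
     = h_cusum n lam x" for x
  proof -
    let ?c = "\<lambda>k. cusum n x (k+1)"
    have z1: "matvec W0 n x k = ?c k" if "k < m" for k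
      using that by (simp add: matvec_def W0_def cusum_def)
    have z2: "matvec W0 n x (k + m) = - ?c k" for k
      by (simp add: matvec_def W0_def cusum_def sum_negf)
    have "net_eval [W1] [b1] [2*n-2] (matvec W0 n x) 0
        = (\<Sum>j<m+m. max (matvec W0 n x j + lam) 0)"
      by (simp add: nm matvec_def relu_shift_def W1_def b1_def)
    also have "\<dots> = (\<Sum>k<m. max (?c k + lam) 0 + max (- ?c k + lam) 0)"
      by (simp add: sum_double z1 z2 sum.distrib)
    finally have E: "net_eval [W1] [b1] [2*n-2] (matvec W0 n x) 0
        = (\<Sum>k<m. max (?c k + lam) 0 + max (- ?c k + lam) 0)" .
    have fin: "finite ((\<lambda>i. \<bar>cusum n x i\<bar>) ` {1..n-1})" by simp
    have ne: "(\<lambda>i. \<bar>cusum n x i\<bar>) ` {1..n-1} \<noteq> {}" using assms(1) by auto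
    have "(Max ((\<lambda>i. \<bar>cusum n x i\<bar>) ` {1..n-1}) > lam) \<longleftrightarrow> (\<exists>i\<in>{1..n-1}. \<bar>cusum n x i\<bar> > lam)"
      using Max_gr_iff[OF fin ne] by auto
    also have "\<dots> \<longleftrightarrow> (\<exists>k<m. \<bar>?c k\<bar> > lam)"
      unfolding nm(2) by (metis (no_types, lifting) Suc_eq_plus1 Suc_le_eq atLeastAtMost_iff
           less_Suc_eq_le not_less_eq_eq Suc_pred le_add2 add_0 nat_le_linear)
    finally show ?thesis
      unfolding h_cusum_def E sum_crit[OF assms(2)] by simp
  qed
  have pos: "real m * (2*lam) > 0" using assms unfolding m_def by auto
  show ?thesis
    unfolding nn_class_def
    apply (simp)
    apply (rule exI[of _ "real m * (2*lam)"])
    apply (simp add: pos)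
    apply (rule exI[of _ W0])
    apply (rule exI[of _ "[W1]"])
    apply simp
    apply (rule exI[of _ "[b1]"])
    apply (simp add: fun_eq_iff)
    using key by (simp split: if_splits) (metis One_nat_def zero_neq_one)
qed

end
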